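(* Let $k$ be a commutative ring, $A$ a commutative $k$-algebra, $m\ge1$ an integer or $m=\infty$, and $D\in\operatorname{HS}_k(A;m)$. Then $\binom{r+s}{r}D_{r+s}-D_r\circ D_s\in\operatorname{Diff}^{(r+s-1)}_{A/k}$ whenever $r+s\le m$; consequently the total symbol $\Sigma_m(D)$ is of exponential type in $(\operatorname{gr}\operatorname{Diff}_{A/k})[[t]]/(t^{m+1})$. Moreover $\Sigma_m(a\bullet D)=a\Sigma_m(D)$ for every $a\in A$.
   Context: $\operatorname{HS}_k(A;m)$: sequences $D=(D_0,\dots,D_m)$ of $k$-linear maps $A\to A$ with $D_0=\mathrm{Id}$, $D_i(xy)=\sum_{r+s=i}D_r(x)D_s(y)$. Each $D_i$ is a $k$-linear differential operator of order $\le i$. $\operatorname{Diff}^{(i)}_{A/k}$ denotes $k$-linear differential operators of order $\le i$ (defined inductively: order $0$ = multiplications by elements of $A$; $\varphi$ has order $\le i+1$ iff $[\varphi,a]=\varphi\circ a-a\circ\varphi$ has order $\le i$ for all $a$), $\operatorname{Diff}^{(-1)}=0$, $\sigma_i$ the symbol map to $\operatorname{gr}^i\operatorname{Diff}_{A/k}$. Total symbol: $\Sigma_m(D)=\sum_{i=0}^m\sigma_i(D_i)t^i\in(\operatorname{gr}\operatorname{Diff}_{A/k})[[t]]/(t^{m+1})$. An element $\sum_{i=0}^mR_it^i$ of $B[[t]]/(t^{m+1})$ is of exponential type if $R_0=1$ and $\binom{i+j}{i}R_{i+j}=R_iR_j$ whenever $i+j\le m$. For $a\in A$, $a\bullet D$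 is the Hasse–Schmidt derivation with $(a\bullet D)_0=\mathrm{Id}$ and $(a\bullet D)_r=a^rD_r$; for an exponential type element, $a\cdot\sum R_it^i=\sum a^iR_it^i$. *)

theory Defs
  imports Main "HOL-Library.Extended_Nat"
begin

text \<open>The commutative k-algebra A is given by a ring homomorphism phi from k to A;
  the k-module structure on A is c . x = phi c * x.\<close>

definition klinear :: "('k::comm_ring_1 \<Rightarrow> 'a::comm_ring_1) \<Rightarrow> ('a \<Rightarrow> 'a) \<Rightarrow> bool" where
  "klinear phi f \<longleftrightarrow> (\<forall>x y. f (x + y) = f x + f y) \<and> (\<forall>c x. f (phi c * x) = phi c * f x)"

fun diffop_nat :: "('k::comm_ring_1 \<Rightarrow> 'a::comm_ring_1) \<Rightarrow> nat \<Rightarrow> ('a \<Rightarrow> 'a) set" where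
  "diffop_nat phi 0 = {f. \<exists>b. f = (\<lambda>x. b * x)}"
| "diffop_nat phi (Suc i) =
     {f. klinear phi f \<and> (\<forall>a. (\<lambda>x. f (a * x) - a * f x) \<in> diffop_nat phi i)}"

definition Diff :: "('k::comm_ring_1 \<Rightarrow> 'a::comm_ring_1) \<Rightarrow> int \<Rightarrow> ('a \<Rightarrow> 'a) set" where
  "Diff phi i = (if i < 0 then {\<lambda>x. 0} else diffop_nat phi (nat i))"

definition is_HS :: "('k::comm_ring_1 \<Rightarrow> 'a::comm_ring_1) \<Rightarrow> enat \<Rightarrow> (nat \<Rightarrow> 'a \<Rightarrow> 'a) \<Rightarrow> bool" where
  "is_HS phi m D \<longleftrightarrow> D 0 = id
     \<and> (\<forall>i. enat i \<le> m \<longrightarrow> klinear phi (D i))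
     \<and> (\<forall>i x y. enat i \<le> m \<longrightarrow> D i (x * y) = (\<Sum>r\<le>i. D r x * D (i - r) y))"

text \<open>Elements of gr Diff = (+)_i Diff^(i)/Diff^(i-1) are represented by families P
  with P i in Diff^(i) and finite support; the represented element is
  sum_i sigma_i(P i). Equality in gr Diff is gr_eq.\<close>

definition gr_valid :: "('k::comm_ring_1 \<Rightarrow> 'a::comm_ring_1) \<Rightarrow> (nat \<Rightarrow> 'a \<Rightarrow> 'a) \<Rightarrow> bool" where
  "gr_valid phi P \<longleftrightarrow> (\<forall>i. P i \<in> Diff phi (int i)) \<and> finite {i. P i \<noteq> (\<lambda>x. 0)}"

definition gr_eq :: "('k::comm_ring_1 \<Rightarrow> 'a::comm_ring_1) \<Rightarrow> (nat \<Rightarrow> 'a \<Rightarrow> 'a) \<Rightarrow> (nat \<Rightarrow> 'a \<Rightarrow> 'a) \<Rightarrow> bool" where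
  "gr_eq phi P Q \<longleftrightarrow> gr_valid phi P \<and> gr_valid phi Q
     \<and> (\<forall>i. (\<lambda>x. P i x - Q i x) \<in> Diff phi (int i - 1))"

definition gr_one :: "nat \<Rightarrow> 'a::comm_ring_1 \<Rightarrow> 'a" where
  "gr_one = (\<lambda>i. if i = 0 then id else (\<lambda>x. 0))"

text \<open>Product in gr Diff, induced by composition: sigma_i(P) sigma_j(Q) = sigma_(i+j)(P o Q).\<close>
definition gr_mult :: "(nat \<Rightarrow> 'a::comm_ring_1 \<Rightarrow> 'a) \<Rightarrow> (nat \<Rightarrow> 'a \<Rightarrow> 'a) \<Rightarrow> nat \<Rightarrow> 'a \<Rightarrow> 'a" where
  "gr_mult P Q = (\<lambda>n x. \<Sum>i\<le>n. P i (Q (n - i) x))"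

definition gr_scal :: "nat \<Rightarrow> (nat \<Rightarrow> 'a::comm_ring_1 \<Rightarrow> 'a) \<Rightarrow> nat \<Rightarrow> 'a \<Rightarrow> 'a" where
  "gr_scal c P = (\<lambda>i x. of_nat c * P i x)"

definition sym :: "nat \<Rightarrow> ('a::comm_ring_1 \<Rightarrow> 'a) \<Rightarrow> nat \<Rightarrow> 'a \<Rightarrow> 'a" where
  "sym i P = (\<lambda>j. if j = i then P else (\<lambda>x. 0))"

text \<open>Elements of (gr Diff)[[t]]/(t^(m+1)) are coefficient sequences R (indices i \<le> m).\<close>
definition series_eq :: "('k::comm_ring_1 \<Rightarrow> 'a::comm_ring_1) \<Rightarrow> enat
     \<Rightarrow> (nat \<Rightarrow> nat \<Rightarrow> 'a \<Rightarrow> 'a) \<Rightarrow> (nat \<Rightarrow> nat \<Rightarrow> 'a \<Rightarrow> 'a) \<Rightarrow> bool" where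
  "series_eq phi m R S \<longleftrightarrow> (\<forall>i. enat i \<le> m \<longrightarrow> gr_eq phi (R i) (S i))"

definition total_symbol :: "(nat \<Rightarrow> 'a::comm_ring_1 \<Rightarrow> 'a) \<Rightarrow> nat \<Rightarrow> nat \<Rightarrow> 'a \<Rightarrow> 'a" where
  "total_symbol D = (\<lambda>i. sym i (D i))"

definition exp_type :: "('k::comm_ring_1 \<Rightarrow> 'a::comm_ring_1) \<Rightarrow> enat
     \<Rightarrow> (nat \<Rightarrow> nat \<Rightarrow> 'a \<Rightarrow> 'a) \<Rightarrow> bool" where
  "exp_type phi m R \<longleftrightarrow> (\<forall>i. enat i \<le> m \<longrightarrow> gr_valid phi (R i))
     \<and> gr_eq phi (R 0) gr_one
     \<and> (\<forall>i j. enat (i + j) \<le> m \<longrightarrow>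
          gr_eq phi (gr_scal ((i + j) choose i) (R (i + j))) (gr_mult (R i) (R j)))"

text \<open>a . (sum R_i t^i) = sum a^i R_i t^i, where a^i acts via sigma_0(a^i) in gr Diff.\<close>
definition series_scale :: "'a::comm_ring_1 \<Rightarrow> (nat \<Rightarrow> nat \<Rightarrow> 'a \<Rightarrow> 'a) \<Rightarrow> nat \<Rightarrow> nat \<Rightarrow> 'a \<Rightarrow> 'a" where
  "series_scale a R = (\<lambda>i. gr_mult (sym 0 (\<lambda>x. a ^ i * x)) (R i))"

definition hs_scale :: "'a::comm_ring_1 \<Rightarrow> (nat \<Rightarrow> 'a \<Rightarrow> 'a) \<Rightarrow> nat \<Rightarrow> 'a \<Rightarrow> 'a" where
  "hs_scale a D = (\<lambda>r. if r = 0 then id else (\<lambda>x. a ^ r * D r x))"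

end

theory Submission
  imports Defs
begin

lemma kl_zero: "klinear phi f \<Longrightarrow> f 0 = 0"
  unfolding klinear_def by (metis add_cancel_right_right add_0)

lemma kl_diff: "klinear phi f \<Longrightarrow> f (x - y) = f x - f y"
  unfolding klinear_def by (metis add_diff_cancel eq_diff_eq)

lemma kl_sum: "klinear phi f \<Longrightarrow> f (\<Sum>i\<in>S. g i) = (\<Sum>i\<in>S. f (g i))"
  by (induction S rule: infinite_finite_induct) (auto simp: kl_zero klinear_def)

lemma diffop_klinear: "f \<in> diffop_nat phi n \<Longrightarrow> klinear phi f"
  by (cases n) (auto simp: klinear_def algebra_simps)

lemma diffop_zero: "(\<lambda>x. 0) \<in> diffop_nat phi n"
proof (induction n)
  case 0 show ?case by (simp only: diffop_nat.simps, rule CollectI, rule exI[of _ 0], rule ext, simp)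
next
  case (Suc n) then show ?case by (simp add: klinear_def)
qed

lemma diffop_add: "f \<in> diffop_nat phi n \<Longrightarrow> g \<in> diffop_nat phi n \<Longrightarrow> (\<lambda>x. f x + g x) \<in> diffop_nat phi n"
proof (induction n arbitrary: f g)
  case 0
  then obtain b c where "f = (\<lambda>x. b * x)" "g = (\<lambda>x. c * x)" by auto
  then show ?case by (auto intro!: exI[of _ "b + c"] simp: algebra_simps)
next
  case (Suc n)
  have "klinear phi (\<lambda>x. f x + g x)" using Suc.prems by (auto simp: klinear_def algebra_simps)
  moreover have "(\<lambda>x. f (a * x) + g (a * x) - a * (f x + g x)) \<in> diffop_nat phi n" for a
  proof -
    have "(\<lambda>x. (f (a * x) - a * f x) + (g (a * x) - a * g x)) \<in> diffop_nat phi n"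
      using Suc by auto
    then show ?thesis by (simp add: algebra_simps)
  qed
  ultimately show ?case by simp
qed

lemma diffop_scal: "f \<in> diffop_nat phi n \<Longrightarrow> (\<lambda>x. b * f x) \<in> diffop_nat phi n"
proof (induction n arbitrary: f)
  case 0
  then obtain c where "f = (\<lambda>x. c * x)" by auto
  then show ?case by (auto intro!: exI[of _ "b * c"] simp: algebra_simps)
next
  case (Suc n)
  have "klinear phi (\<lambda>x. b * f x)" using Suc.prems by (auto simp: klinear_def algebra_simps)
  moreover have "(\<lambda>x. b * f (a * x) - a * (b * f x)) \<in> diffop_nat phi n" for a
  proof -
    have "(\<lambda>x. b * (f (a * x) - a * f x)) \<in> diffop_nat phi n"
      using Suc by auto
    then show ?thesis by (simp add: algebra_simps)
  qed
  ultimately show ?case by simp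
qed

lemma diffop_diff: "f \<in> diffop_nat phi n \<Longrightarrow> g \<in> diffop_nat phi n \<Longrightarrow> (\<lambda>x. f x - g x) \<in> diffop_nat phi n"
proof -
  assume "f \<in> diffop_nat phi n" "g \<in> diffop_nat phi n"
  then have "(\<lambda>x. f x + (-1) * g x) \<in> diffop_nat phi n" by (intro diffop_add diffop_scal)
  then show ?thesis by simp
qed

lemma diffop_sum: "finite S \<Longrightarrow> (\<And>i. i \<in> S \<Longrightarrow> F i \<in> diffop_nat phi n) \<Longrightarrow> (\<lambda>x. \<Sum>i\<in>S. F i x) \<in> diffop_nat phi n"
proof (induction S rule: finite_induct)
  case empty then show ?case using diffop_zero by simp
next
  case (insert i S)
  then have "(\<lambda>x. F i x + (\<Sum>i\<in>S. F i x)) \<in> diffop_nat phi n" by (intro diffop_add) auto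
  then show ?case using insert by simp
qed

lemma diffop_mono: "f \<in> diffop_nat phi n \<Longrightarrow> f \<in> diffop_nat phi (Suc n)"
proof (induction n arbitrary: f)
  case 0
  then obtain c where "f = (\<lambda>x. c * x)" by auto
  then show ?case using diffop_zero[of phi 0]
    by (auto simp: klinear_def algebra_simps)
next
  case (Suc n) then show ?case by auto
qed

lemma diffop_mono_le: "p \<le> q \<Longrightarrow> f \<in> diffop_nat phi p \<Longrightarrow> f \<in> diffop_nat phi q"
  by (induction q rule: dec_induct) (auto simp del: diffop_nat.simps intro: diffop_mono)

lemma diffop_comp: "f \<in> diffop_nat phi p \<Longrightarrow> g \<in> diffop_nat phi q \<Longrightarrow> (\<lambda>x. f (g x)) \<in> diffop_nat phi (p + q)"
proof (induction "p + q" arbitrary: p q f g)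
  case 0
  then obtain b c where "f = (\<lambda>x. b * x)" "g = (\<lambda>x. c * x)" by auto
  then show ?case using 0 by (auto intro!: exI[of _ "b * c"] simp: algebra_simps)
next
  case (Suc k)
  have lf: "klinear phi f" and lg: "klinear phi g" using Suc.prems diffop_klinear by auto
  have "klinear phi (\<lambda>x. f (g x))" using lf lg by (auto simp: klinear_def)
  moreover have "(\<lambda>x. f (g (a * x)) - a * f (g x)) \<in> diffop_nat phi k" for a
  proof -
    have t1: "(\<lambda>x. f (g (a * x) - a * g x)) \<in> diffop_nat phi k"
    proof (cases q)
      case 0
      then obtain c where "g = (\<lambda>x. c * x)" using Suc.prems by auto
      then show ?thesis using diffop_zero kl_zero[OF lf] by (simp add: algebra_simps)
    next
      case (Suc q')
      then have "(\<lambda>x. g (a * x) - a * g x) \<in> diffop_nat phi q'" using Suc.prems by auto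
      then show ?thesis using Suc.hyps(1)[of p q'] Suc.prems Suc.hyps(2) \<open>q = Suc q'\<close> by auto
    qed
    have t2: "(\<lambda>x. f (a * g x) - a * f (g x)) \<in> diffop_nat phi k"
    proof (cases p)
      case 0
      then obtain c where "f = (\<lambda>x. c * x)" using Suc.prems by auto
      then show ?thesis using diffop_zero by (simp add: algebra_simps)
    next
      case (Suc p')
      then have "(\<lambda>x. f (a * x) - a * f x) \<in> diffop_nat phi p'" using Suc.prems by auto
      from Suc.hyps(1)[of p' q _ g, OF _ this] Suc.prems Suc.hyps(2) \<open>p = Suc p'\<close>
      show ?thesis by auto
    qed
    have "(\<lambda>x. f (g (a * x) - a * g x) + (f (a * g x) - a * f (g x))) \<in> diffop_nat phi k"
      using t1 t2 by (rule diffop_add)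
    then show ?thesis using kl_diff[OF lf] by (simp add: algebra_simps)
  qed
  ultimately show ?case using Suc.hyps(2)[symmetric] by simp
qed

lemma Diff_nat: "Diff phi (int j) = diffop_nat phi j"
  by (simp add: Diff_def)

lemma Diff_zero: "(\<lambda>x. 0) \<in> Diff phi i"
  by (simp add: Diff_def diffop_zero)

lemma HS_D0: "is_HS phi m D \<Longrightarrow> D 0 x = x"
  by (simp add: is_HS_def)

lemma HS_lin: "is_HS phi m D \<Longrightarrow> enat i \<le> m \<Longrightarrow> klinear phi (D i)"
  by (simp add: is_HS_def)

lemma HS_leib: "is_HS phi m D \<Longrightarrow> enat i \<le> m \<Longrightarrow> D i (x * y) = (\<Sum>r\<le>i. D r x * D (i - r) y)"
  by (simp add: is_HS_def)

lemma enat_le_trans: "j \<le> i \<Longrightarrow> enat i \<le> m \<Longrightarrow> enat j \<le> m"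
  by (meson enat_ord_simps(1) order_trans)

lemma HS_comm: assumes HS: "is_HS phi m D" and im: "enat i \<le> m"
  shows "D i (a * x) - a * D i x = (\<Sum>r\<in>{1..i}. D r a * D (i - r) x)"
proof -
  have "D i (a * x) = (\<Sum>r\<in>{0..i}. D r a * D (i - r) x)"
    using HS_leib[OF HS im] by (simp add: atMost_atLeast0)
  also have "\<dots> = a * D i x + (\<Sum>r\<in>{1..i}. D r a * D (i - r) x)"
    by (subst sum.atLeast_Suc_atMost) (auto simp: HS_D0[OF HS])
  finally show ?thesis by simp
qed

lemma HS_order: assumes HS: "is_HS phi m D"
  shows "enat i \<le> m \<Longrightarrow> D i \<in> diffop_nat phi i"
proof (induction i rule: less_induct)
  case (less i)
  show ?case
  proof (cases i)
    case 0
    then show ?thesis using HS by (auto simp: is_HS_def intro!: exI[of _ 1])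
  next
    case (Suc k)
    have "(\<lambda>x. D i (a * x) - a * D i x) \<in> diffop_nat phi k" for a
    proof -
      have "(\<lambda>x. \<Sum>r\<in>{1..i}. D r a * D (i - r) x) \<in> diffop_nat phi k"
      proof (rule diffop_sum)
        fix r assume r: "r \<in> {1..i}"
        have "D (i - r) \<in> diffop_nat phi (i - r)"
          using r Suc enat_le_trans[OF _ less.prems, of "i - r"] by (intro less.IH) auto
        then have "D (i - r) \<in> diffop_nat phi k" by (rule diffop_mono_le[rotated]) (use r Suc in auto)
        then show "(\<lambda>x. D r a * D (i - r) x) \<in> diffop_nat phi k" by (rule diffop_scal)
      qed simp
      then show ?thesis using HS_comm[OF HS less.prems] by simp
    qed
    then show ?thesis using Suc HS_lin[OF HS less.prems] by simp
  qed
qed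

lemma sum_split0: "(\<Sum>j\<le>(s::nat). f j) = f 0 + (\<Sum>j\<in>{1..s}. (f j :: 'a::comm_monoid_add))"
  by (simp add: atMost_atLeast0 sum.atLeast_Suc_atMost)

lemma sum_split1: "1 \<le> (s::nat) \<Longrightarrow> (\<Sum>j\<in>{1..s}. f j) = f 1 + (\<Sum>j\<in>{2..s}. (f j :: 'a::comm_monoid_add))"
  by (subst sum.atLeast_Suc_atMost) (auto simp: numeral_2_eq_2)

lemma HS_part1: assumes HS: "is_HS phi m D"
  shows "enat (r + s) \<le> m \<Longrightarrow>
    (\<lambda>x. of_nat ((r + s) choose r) * D (r + s) x - D r (D s x)) \<in> Diff phi (int (r + s) - 1)"
proof (induction "r + s" arbitrary: r s rule: less_induct)
  case less
  note D0 = HS_D0[OF HS]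
  show ?case
  proof (cases "r = 0 \<or> s = 0")
    case True
    then have "(\<lambda>x. of_nat ((r + s) choose r) * D (r + s) x - D r (D s x)) = (\<lambda>x. 0)"
      by (auto simp: D0)
    then show ?thesis by (simp add: Diff_zero)
  next
    case False
    then obtain r' s' where rs: "r = Suc r'" "s = Suc s'" by (meson not0_implies_Suc)
    define k where "k = r' + s'"
    define n where "n = r + s"
    have nk: "n = Suc (Suc k)" using rs by (simp add: n_def k_def)
    have nm: "enat n \<le> m" using less.prems n_def by simp
    have le: "j \<le> n \<Longrightarrow> enat j \<le> m" for j using enat_le_trans[OF _ nm] by simp
    have ord: "j \<le> n \<Longrightarrow> D j \<in> diffop_nat phi j" for j using HS_order[OF HS le] by simp
    have lin: "j \<le> n \<Longrightarrow> klinear phi (D j)" for j using HS_lin[OF HS le] by simp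
    have leib: "j \<le> n \<Longrightarrow> D j (x * y) = (\<Sum>r\<le>j. D r x * D (j - r) y)" for j x y
      using HS_leib[OF HS le] by simp
    define E where "E = (\<lambda>r s x. of_nat ((r + s) choose r) * D (r + s) x - D r (D s x))"
    have IH1: "E r' (Suc s') \<in> diffop_nat phi k"
    proof -
      have "E r' (Suc s') \<in> Diff phi (int (r' + Suc s') - 1)"
        unfolding E_def using rs le[of "r' + Suc s'"] n_def by (intro less.hyps) auto
      moreover have "int (r' + Suc s') - 1 = int k" by (simp add: k_def)
      ultimately show ?thesis by (simp add: Diff_nat)
    qed
    have IH2: "E (Suc r') s' \<in> diffop_nat phi k"
    proof -
      have "E (Suc r') s' \<in> Diff phi (int (Suc r' + s') - 1)"
        unfolding E_def using rs le[of "Suc r' + s'"] n_def by (intro less.hyps) auto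
      moreover have "int (Suc r' + s') - 1 = int k" by (simp add: k_def)
      ultimately show ?thesis by (simp add: Diff_nat)
    qed
    have Ein: "E r s \<in> diffop_nat phi n"
    proof -
      have "(\<lambda>x. of_nat ((r + s) choose r) * D n x - D r (D s x)) \<in> diffop_nat phi n"
        apply (rule diffop_diff)
         apply (rule diffop_scal, rule ord, simp)
        using diffop_comp[OF ord[of r] ord[of s]] n_def by simp
      then show ?thesis by (simp add: E_def n_def)
    qed
    define F where "F = (\<lambda>a u j x. D u (D j a) * D (r - u) (D (s - j) x))"
    have Fmem: "(\<lambda>x. F a u j x) \<in> diffop_nat phi k" if "u \<le> r" "j \<le> s" "2 \<le> u + j" for a u j
    proof -
      have "(\<lambda>x. D (r - u) (D (s - j) x)) \<in> diffop_nat phi ((r - u) + (s - j))"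
        using that n_def by (intro diffop_comp ord) auto
      then have "(\<lambda>x. D (r - u) (D (s - j) x)) \<in> diffop_nat phi k"
        by (rule diffop_mono_le[rotated]) (use that nk n_def in auto)
      then show ?thesis unfolding F_def by (rule diffop_scal)
    qed
    have comm: "(\<lambda>x. E r s (a * x) - a * E r s x) \<in> diffop_nat phi k" for a
    proof -
      define C where "C = (r + s) choose r"
      define C1 where "C1 = (r' + Suc s') choose r'"
      define C2 where "C2 = (Suc r' + s') choose Suc r'"
      have CC: "C = C1 + C2" unfolding C_def C1_def C2_def using rs by simp
      have eq: "E r s (a * x) - a * E r s x =
        D 1 a * (E r' (Suc s') x + E (Suc r') s' x)
        + (of_nat C * (\<Sum>l\<in>{2..n}. D l a * D (n - l) x)
           - ((\<Sum>u\<in>{2..r}. F a u 0 x) + (\<Sum>j\<in>{2..s}. F a 0 j x)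
              + (\<Sum>j\<in>{1..s}. \<Sum>u\<in>{1..r}. F a u j x)))" for x
      proof -
        have h1: "D n (a * x) - a * D n x = D 1 a * D (n - 1) x + (\<Sum>l\<in>{2..n}. D l a * D (n - l) x)"
          using HS_comm[OF HS nm] sum_split1[of n "\<lambda>l. D l a * D (n - l) x"] nk by simp
        have h2: "D r (D s (a * x)) = (\<Sum>j\<le>s. \<Sum>u\<le>r. F a u j x)"
        proof -
          have "D r (D s (a * x)) = D r (\<Sum>j\<le>s. D j a * D (s - j) x)"
            using leib[of s] n_def by simp
          also have "\<dots> = (\<Sum>j\<le>s. D r (D j a * D (s - j) x))"
            using kl_sum[OF lin[of r]] n_def by simp
          also have "\<dots> = (\<Sum>j\<le>s. \<Sum>u\<le>r. F a u j x)"
            unfolding F_def using leib[of r] n_def by simp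
          finally show ?thesis .
        qed
        have h3: "(\<Sum>j\<le>s. \<Sum>u\<le>r. F a u j x) = F a 0 0 x + F a 1 0 x + F a 0 1 x
          + (\<Sum>u\<in>{2..r}. F a u 0 x) + (\<Sum>j\<in>{2..s}. F a 0 j x)
          + (\<Sum>j\<in>{1..s}. \<Sum>u\<in>{1..r}. F a u j x)"
        proof -
          have "(\<Sum>j\<le>s. \<Sum>u\<le>r. F a u j x) = (\<Sum>u\<le>r. F a u 0 x) + (\<Sum>j\<in>{1..s}. \<Sum>u\<le>r. F a u j x)"
            by (rule sum_split0)
          also have "(\<Sum>j\<in>{1..s}. \<Sum>u\<le>r. F a u j x) = (\<Sum>j\<in>{1..s}. F a 0 j x + (\<Sum>u\<in>{1..r}. F a u j x))"
            by (simp add: sum_split0)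
          also have "\<dots> = (\<Sum>j\<in>{1..s}. F a 0 j x) + (\<Sum>j\<in>{1..s}. \<Sum>u\<in>{1..r}. F a u j x)"
            by (simp add: sum.distrib)
          also have "(\<Sum>j\<in>{1..s}. F a 0 j x) = F a 0 1 x + (\<Sum>j\<in>{2..s}. F a 0 j x)"
            using rs by (intro sum_split1) auto
          also have "(\<Sum>u\<le>r. F a u 0 x) = F a 0 0 x + (F a 1 0 x + (\<Sum>u\<in>{2..r}. F a u 0 x))"
            using sum_split0[of "\<lambda>u. F a u 0 x" r] sum_split1[of r "\<lambda>u. F a u 0 x"] rs by simp
          finally show ?thesis by (simp add: algebra_simps)
        qed
        have F00: "F a 0 0 x = a * D r (D s x)" by (simp add: F_def D0)
        have F10: "F a 1 0 x = D 1 a * D r' (D s x)" by (simp add: F_def D0 rs)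
        have F01: "F a 0 1 x = D 1 a * D r (D s' x)" by (simp add: F_def D0 rs)
        have nn: "n - 1 = r' + Suc s'" "Suc r' + s' = r' + Suc s'" using rs n_def by auto
        have "E r s (a * x) - a * E r s x = of_nat C * (D n (a * x) - a * D n x) - (D r (D s (a * x)) - a * D r (D s x))"
          by (simp add: E_def C_def n_def algebra_simps)
        also have "\<dots> = of_nat C * (D 1 a * D (n - 1) x + (\<Sum>l\<in>{2..n}. D l a * D (n - l) x))
            - (F a 1 0 x + F a 0 1 x + (\<Sum>u\<in>{2..r}. F a u 0 x) + (\<Sum>j\<in>{2..s}. F a 0 j x)
              + (\<Sum>j\<in>{1..s}. \<Sum>u\<in>{1..r}. F a u j x))"
          unfolding h1 h2 h3 F00 by (simp add: algebra_simps)
        also have "\<dots> = D 1 a * (E r' (Suc s') x + E (Suc r') s' x)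
        + (of_nat C * (\<Sum>l\<in>{2..n}. D l a * D (n - l) x)
           - ((\<Sum>u\<in>{2..r}. F a u 0 x) + (\<Sum>j\<in>{2..s}. F a 0 j x)
              + (\<Sum>j\<in>{1..s}. \<Sum>u\<in>{1..r}. F a u j x)))"
        proof -
          have E1: "E r' (Suc s') x = of_nat C1 * D (n - 1) x - D r' (D s x)"
            unfolding E_def C1_def nn rs by simp
          have E2: "E (Suc r') s' x = of_nat C2 * D (n - 1) x - D r (D s' x)"
            unfolding E_def C2_def nn rs by simp
          show ?thesis unfolding F10 F01 E1 E2 CC of_nat_add by (simp add: algebra_simps)
        qed
        finally show ?thesis .
      qed
      have mem: "(\<lambda>x. D 1 a * (E r' (Suc s') x + E (Suc r') s' x)
        + (of_nat C * (\<Sum>l\<in>{2..n}. D l a * D (n - l) x)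
           - ((\<Sum>u\<in>{2..r}. F a u 0 x) + (\<Sum>j\<in>{2..s}. F a 0 j x)
              + (\<Sum>j\<in>{1..s}. \<Sum>u\<in>{1..r}. F a u j x)))) \<in> diffop_nat phi k"
      proof -
        have P1: "(\<lambda>x. D 1 a * (E r' (Suc s') x + E (Suc r') s' x)) \<in> diffop_nat phi k"
          by (intro diffop_scal diffop_add IH1 IH2)
        have P2: "(\<lambda>x. of_nat C * (\<Sum>l\<in>{2..n}. D l a * D (n - l) x)) \<in> diffop_nat phi k"
        proof (rule diffop_scal, rule diffop_sum, simp)
          fix l assume l: "l \<in> {2..n}"
          have "D (n - l) \<in> diffop_nat phi k"
            by (rule diffop_mono_le[rotated], rule ord) (use l nk in auto)
          then show "(\<lambda>x. D l a * D (n - l) x) \<in> diffop_nat phi k" by (rule diffop_scal)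
        qed
        have P3: "(\<lambda>x. \<Sum>u\<in>{2..r}. F a u 0 x) \<in> diffop_nat phi k"
          by (intro diffop_sum finite_atLeastAtMost Fmem) auto
        have P4: "(\<lambda>x. \<Sum>j\<in>{2..s}. F a 0 j x) \<in> diffop_nat phi k"
          by (intro diffop_sum finite_atLeastAtMost Fmem) auto
        have P5: "(\<lambda>x. \<Sum>j\<in>{1..s}. \<Sum>u\<in>{1..r}. F a u j x) \<in> diffop_nat phi k"
          by (intro diffop_sum finite_atLeastAtMost Fmem) auto
        show ?thesis
          by (intro diffop_add diffop_diff P1 P2 P3 P4 P5)
      qed
      then show ?thesis by (subst (asm) eq[symmetric])
    qed
    have "E r s \<in> diffop_nat phi (Suc k)"
      using comm diffop_klinear[OF Ein] by simp
    moreover have "int (r + s) - 1 = int (Suc k)" using nk n_def by simp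
    ultimately show ?thesis unfolding E_def by (metis Diff_nat)
  qed
qed

lemma gr_mult_sym: assumes "P 0 = 0"
  shows "gr_mult (sym i P) (sym j Q) = sym (i + j) (\<lambda>x. P (Q x))"
proof (rule ext, rule ext)
  fix n x
  have "gr_mult (sym i P) (sym j Q) n x = (\<Sum>l\<le>n. if l = i then P (sym j Q (n - l) x) else 0)"
    unfolding gr_mult_def sym_def by (intro sum.cong) auto
  also have "\<dots> = (if i \<le> n then P (sym j Q (n - i) x) else 0)"
    by (simp add: sum.delta')
  also have "\<dots> = sym (i + j) (\<lambda>x. P (Q x)) n x"
    using assms by (auto simp: sym_def)
  finally show "gr_mult (sym i P) (sym j Q) n x = sym (i + j) (\<lambda>x. P (Q x)) n x" .
qed

lemma sym_valid: "P \<in> diffop_nat phi i \<Longrightarrow> gr_valid phi (sym i P)"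
  unfolding gr_valid_def
proof (intro conjI allI)
  fix j assume "P \<in> diffop_nat phi i"
  then show "sym i P j \<in> Diff phi (int j)" by (auto simp: sym_def Diff_nat diffop_zero)
next
  show "finite {j. sym i P j \<noteq> (\<lambda>x. 0)}"
    by (rule finite_subset[of _ "{i}"]) (auto simp: sym_def)
qed

lemma gr_eq_sym: "P \<in> diffop_nat phi n \<Longrightarrow> Q \<in> diffop_nat phi n \<Longrightarrow>
  (\<lambda>x. P x - Q x) \<in> Diff phi (int n - 1) \<Longrightarrow> gr_eq phi (sym n P) (sym n Q)"
  unfolding gr_eq_def by (auto simp: sym_valid Diff_zero) (auto simp: sym_def Diff_zero)

theorem mainTheorem7:
  fixes phi :: "'k::comm_ring_1 \<Rightarrow> 'a::comm_ring_1"
    and m :: enat and D :: "nat \<Rightarrow> 'a \<Rightarrow> 'a"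
  assumes hom_one: "phi 1 = 1"
    and hom_add: "\<And>x y. phi (x + y) = phi x + phi y"
    and hom_mult: "\<And>x y. phi (x * y) = phi x * phi y"
    and m_ge: "m \<ge> 1"
    and HS: "is_HS phi m D"
  shows "(\<forall>r s. enat (r + s) \<le> m \<longrightarrow>
            (\<lambda>x. of_nat ((r + s) choose r) * D (r + s) x - D r (D s x)) \<in> Diff phi (int (r + s) - 1))
       \<and> exp_type phi m (total_symbol D)
       \<and> (\<forall>a. series_eq phi m (total_symbol (hs_scale a D)) (series_scale a (total_symbol D)))"
proof (intro conjI allI impI)
  fix r s assume "enat (r + s) \<le> m"
  then show "(\<lambda>x. of_nat ((r + s) choose r) * D (r + s) x - D r (D s x)) \<in> Diff phi (int (r + s) - 1)"
    by (rule HS_part1[OF HS])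
next
  have ord: "enat i \<le> m \<Longrightarrow> D i \<in> diffop_nat phi i" for i by (rule HS_order[OF HS])
  have D0: "D 0 = id" using HS by (simp add: is_HS_def)
  have Dz: "enat i \<le> m \<Longrightarrow> D i 0 = 0" for i using kl_zero HS_lin[OF HS] by blast
  have idin: "id \<in> diffop_nat phi 0" by (simp, rule exI[of _ 1], auto)
  show "exp_type phi m (total_symbol D)"
    unfolding exp_type_def
  proof (intro conjI allI impI)
    fix i assume "enat i \<le> m"
    then show "gr_valid phi (total_symbol D i)" by (simp add: total_symbol_def sym_valid ord)
  next
    have "gr_one = sym 0 (id :: 'a \<Rightarrow> 'a)" by (auto simp: gr_one_def sym_def)
    moreover have "gr_eq phi (sym 0 id) (sym 0 (id :: 'a \<Rightarrow> 'a))"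
      by (rule gr_eq_sym[OF idin idin]) (simp add: Diff_def)
    ultimately show "gr_eq phi (total_symbol D 0) gr_one"
      by (simp add: total_symbol_def D0)
  next
    fix i j assume ij: "enat (i + j) \<le> m"
    have im: "enat i \<le> m" and jm: "enat j \<le> m" using enat_le_trans[OF _ ij, of i] enat_le_trans[OF _ ij, of j] by auto
    have e1: "gr_scal ((i + j) choose i) (total_symbol D (i + j))
      = sym (i + j) (\<lambda>x. of_nat ((i + j) choose i) * D (i + j) x)"
      by (auto simp: gr_scal_def total_symbol_def sym_def)
    have e2: "gr_mult (total_symbol D i) (total_symbol D j) = sym (i + j) (\<lambda>x. D i (D j x))"
      unfolding total_symbol_def by (rule gr_mult_sym, rule Dz[OF im])
    show "gr_eq phi (gr_scal ((i + j) choose i) (total_symbol D (i + j))) (gr_mult (total_symbol D i) (total_symbol D j))"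
      unfolding e1 e2
      by (intro gr_eq_sym diffop_scal ord ij diffop_comp[OF ord[OF im] ord[OF jm]] HS_part1[OF HS])
  qed
next
  fix a
  have ord: "enat i \<le> m \<Longrightarrow> D i \<in> diffop_nat phi i" for i by (rule HS_order[OF HS])
  have D0: "D 0 = id" using HS by (simp add: is_HS_def)
  show "series_eq phi m (total_symbol (hs_scale a D)) (series_scale a (total_symbol D))"
    unfolding series_eq_def
  proof (intro allI impI)
    fix i assume im: "enat i \<le> m"
    have h: "hs_scale a D i = (\<lambda>x. a ^ i * D i x)" by (auto simp: hs_scale_def D0)
    have e: "series_scale a (total_symbol D) i = sym i (\<lambda>x. a ^ i * D i x)"
      unfolding series_scale_def total_symbol_def using gr_mult_sym[of "\<lambda>x. a ^ i * x" 0 i "D i"] by simp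
    have v: "(\<lambda>x. a ^ i * D i x) \<in> diffop_nat phi i" by (intro diffop_scal ord im)
    show "gr_eq phi (total_symbol (hs_scale a D) i) (series_scale a (total_symbol D) i)"
    proof -
      have e2: "total_symbol (hs_scale a D) i = sym i (\<lambda>x. a ^ i * D i x)"
        by (simp add: total_symbol_def h)
      show ?thesis unfolding e e2 by (intro gr_eq_sym v) (simp add: Diff_zero)
    qed
  qed
qed

end
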